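(* Let $\mathcal{X}$ be a nonempty closed domain set whose closed convex hull $\operatorname{clconv}(\mathcal{X})$ contains no line, let $\underline{m}^*\ge0$ be an integer, and consider only one-sided LMIs ($b_i^l=-\infty$ for all $i\in[m]$). The following are equivalent: (a) every face $F$ of $\operatorname{clconv}(\mathcal{X})$ of dimension at most $\underline{m}^*$ satisfies $F\subseteq\mathcal{X}$; (b) $\mathbf{V}_{\mathrm{opt}}=\mathbf{V}_{\mathrm{rel}}$ for every objective matrix $A_0$ and every system of $m$ one-sided LMIs $\langle A_i,X\rangle\le b_i^u$, $i\in[m]$, such that: (i) $\mathcal{C}_{\mathrm{rel}}\cap\operatorname{ri}(\operatorname{clconv}(\mathcal{X}))\neq\emptyset$; (ii) $\mathbf{V}_{\mathrm{rel}}>-\infty$; (iii) the set of optimal solutions of $\min_{X\in\mathcal{C}_{\mathrm{rel}}}\langle A_0,X\rangle$ is bounded; (iv) there exist an optimal solution $X^*$ of this problem and an optimal Lagrangian multiplier vector $\mu^*\in\mathbb{R}^m_+$ with exactly $\underline{m}^*$ nonzero entries, indexed by $T\subseteq[m]$ (i.e. $\mu^*_i=0$ whenever $\langle A_i,X^*\rangle<b_i^u$, and $-A_0-\sum_{i\in T}\mu^*_iA_i\in\mathcal{N}_{\operatorname{clconv}(\mathcal{X})}(X^* )$); and (v) with $\mathcal{H}=\operatorname{span}\{A_i\}_{i\in T}$, the matrices $A_j-\operatorname{Proj}_{\mathcal{H}}(A_j)$, $j\in[m]\setminus T$, are parallel with the same direction (there is $G$ with $A_j-\operatorname{Proj}_{\mathcal{H}}(A_j)=c_jG$,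 $c_j\ge0$, for all $j\in[m]\setminus T$).
   Context: Let $\mathcal{Q}$ be one of $\mathbb{S}^n_+$, $\mathbb{S}^n$ or $\mathbb{R}^{n\times p}$, where $k\le n\le p$ are positive integers, with trace inner product $\langle A,X\rangle=\operatorname{tr}(A^\top X)$. A domain set is a set $\mathcal{X}=\{X\in\mathcal{Q}:\operatorname{rank}(X)\le k,\ F_j(X)\le0\ \forall j\in[t]\}$ with each $F_j:\mathcal{Q}\to\mathbb{R}$ continuous. Given matrices $A_1,\dots,A_m$ (same size as elements of $\mathcal{Q}$) and $b_i^u\in(-\infty,+\infty]$, set $\mathcal{C}=\{X\in\mathcal{X}:\langle A_i,X\rangle\le b_i^u\ \forall i\}$, $\mathcal{C}_{\mathrm{rel}}=\{X\in\operatorname{clconv}(\mathcal{X}):\langle A_i,X\rangle\le b_i^u\ \forall i\}$, $\mathbf{V}_{\mathrm{opt}}=\inf_{X\in\mathcal{C}}\langle A_0,X\rangle$, $\mathbf{V}_{\mathrm{rel}}=\inf_{X\in\mathcal{C}_{\mathrm{rel}}}\langle A_0,X\rangle$. $\operatorname{ri}$ denotes relative interior; $\mathcal{N}_D(X)=\{G:\langle G,Y-X\rangle\le0\ \forall Y\in D\}$ is the normal cone; $\operatorname{Proj}_{\mathcal{H}}$ is orthogonal projection onto $\mathcal{H}$ in the trace inner product. A face of a closed convex set $D$ is a convex $F\subseteq D$ such that any segment $[a,b]\subseteq D$ whose open part meets $F$ lies in $F$; its dimension is that of its affine hull. *)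

theory Defs
  imports "HOL-Analysis.Analysis"
begin

text \<open>Matrices are elements of real^'p^'n (n rows, p columns). The library inner product
  on this type is sum_i sum_j X_ij Y_ij, i.e. the trace inner product tr(X^T Y).\<close>

definition sym_mats :: "(real^'n^'n) set" where
  "sym_mats = {X. transpose X = X}"

definition psd_mats :: "(real^'n^'n) set" where
  "psd_mats = {X. transpose X = X \<and> (\<forall>v. 0 \<le> v \<bullet> (X *v v))}"

definition is_domain_set :: "(real^'p^'n) set \<Rightarrow> nat \<Rightarrow> (real^'p^'n) set \<Rightarrow> bool" where
  "is_domain_set Q k Xs \<longleftrightarrow>
     (\<exists>(t::nat) (F :: nat \<Rightarrow> real^'p^'n \<Rightarrow> real).
        (\<forall>j\<in>{1..t}. continuous_on Q (F j)) \<and>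
        Xs = {X \<in> Q. rank X \<le> k \<and> (\<forall>j\<in>{1..t}. F j X \<le> 0)})"

definition clconv :: "'a::euclidean_space set \<Rightarrow> 'a set" where
  "clconv S = closure (convex hull S)"

definition contains_line :: "'a::real_vector set \<Rightarrow> bool" where
  "contains_line S \<longleftrightarrow> (\<exists>x d. d \<noteq> 0 \<and> (\<forall>s::real. x + s *\<^sub>R d \<in> S))"

definition normal_cone :: "'a::real_inner set \<Rightarrow> 'a \<Rightarrow> 'a set" where
  "normal_cone D X = {G. \<forall>Y\<in>D. G \<bullet> (Y - X) \<le> 0}"

definition orth_proj :: "'a::euclidean_space set \<Rightarrow> 'a \<Rightarrow> 'a" where
  "orth_proj S x = (THE y. y \<in> span S \<and> (\<forall>z\<in>span S. (x - y) \<bullet> z = 0))"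

definition face_cond :: "'a::euclidean_space set \<Rightarrow> nat \<Rightarrow> bool" where
  "face_cond Xs mstar \<longleftrightarrow>
     (\<forall>F. F face_of clconv Xs \<and> aff_dim F \<le> int mstar \<longrightarrow> F \<subseteq> Xs)"

text \<open>Condition (b). Constraints indexed by [m] = {1..m}; right-hand sides b_i^u in (-inf,+inf]
  are extended reals different from -inf; the value of an infimum is taken in ereal.\<close>
definition lmi_cond :: "'a::euclidean_space set \<Rightarrow> nat \<Rightarrow> bool" where
  "lmi_cond Xs mstar \<longleftrightarrow>
   (\<forall>(m::nat) (A0::'a) (A::nat \<Rightarrow> 'a) (b::nat \<Rightarrow> ereal).
     let D = clconv Xs;
         C = {X \<in> Xs. \<forall>i\<in>{1..m}. ereal (A i \<bullet> X) \<le> b i};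
         Crel = {X \<in> D. \<forall>i\<in>{1..m}. ereal (A i \<bullet> X) \<le> b i};
         Vopt = (INF X\<in>C. ereal (A0 \<bullet> X));
         Vrel = (INF X\<in>Crel. ereal (A0 \<bullet> X))
     in ((\<forall>i\<in>{1..m}. b i \<noteq> -\<infinity>)
         \<and> Crel \<inter> rel_interior D \<noteq> {}
         \<and> -\<infinity> < Vrel
         \<and> bounded {X \<in> Crel. ereal (A0 \<bullet> X) = Vrel}
         \<and> (\<exists>Xstar (\<mu>::nat \<Rightarrow> real) T.
               Xstar \<in> Crel \<and> ereal (A0 \<bullet> Xstar) = Vrel
               \<and> (\<forall>i\<in>{1..m}. 0 \<le> \<mu> i)
               \<and> T = {i\<in>{1..m}. \<mu> i \<noteq> 0} \<and> card T = mstar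
               \<and> (\<forall>i\<in>{1..m}. ereal (A i \<bullet> Xstar) < b i \<longrightarrow> \<mu> i = 0)
               \<and> - A0 - (\<Sum>i\<in>T. \<mu> i *\<^sub>R A i) \<in> normal_cone D Xstar
               \<and> (\<exists>G. \<forall>j\<in>{1..m} - T. \<exists>c::real. 0 \<le> c \<and>
                        A j - orth_proj (A ` T) (A j) = c *\<^sub>R G)))
        \<longrightarrow> Vopt = Vrel)"

end

theory Submission
  imports Defs
begin


lemma min_face:
  fixes D :: "'a::euclidean_space set"
  assumes "convex D" "e \<in> D"
  shows "\<exists>F. F face_of D \<and> e \<in> rel_interior F"
proof -
  let ?P = "\<lambda>F. F face_of D \<and> e \<in> F"
  have "?P D" using assms face_of_refl by blast
  then obtain F where PF: "?P F" and minF: "\<And>F'. ?P F' \<Longrightarrow> nat (aff_dim F + 1) \<le> nat (aff_dim F' + 1)"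
    using ex_has_least_nat[of ?P D "\<lambda>F. nat (aff_dim F + 1)"] by blast
  have cF: "convex F" using PF face_of_imp_convex by blast
  show ?thesis
  proof (rule ccontr)
    assume "\<not> ?thesis"
    then have "e \<notin> rel_interior F" using PF by blast
    then obtain a where a: "a \<noteq> 0" "\<And>y. y \<in> F \<Longrightarrow> a \<bullet> e \<le> a \<bullet> y"
        "\<And>y. y \<in> rel_interior F \<Longrightarrow> a \<bullet> e < a \<bullet> y"
      using supporting_hyperplane_rel_boundary[OF cF] PF by metis
    let ?F' = "F \<inter> {y. a \<bullet> y = a \<bullet> e}"
    have f1: "?F' face_of F" by (rule face_of_Int_supporting_hyperplane_ge[OF cF]) (use a(2) in auto)
    have f2: "?F' face_of D" using face_of_trans[OF f1] PF by blast
    have "rel_interior F \<noteq> {}" using rel_interior_eq_empty[OF cF] PF by blast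
    then obtain y where y: "y \<in> rel_interior F" by blast
    have "y \<notin> ?F'" using a(3)[OF y] by auto
    moreover have "y \<in> F" using y rel_interior_subset by blast
    ultimately have ne: "?F' \<noteq> F" by blast
    have lt: "aff_dim ?F' < aff_dim F" using face_of_aff_dim_lt[OF cF f1 ne] .
    have "aff_dim ?F' \<ge> -1" using aff_dim_geq by blast
    then have "nat (aff_dim ?F' + 1) < nat (aff_dim F + 1)" using lt by linarith
    moreover have "nat (aff_dim F + 1) \<le> nat (aff_dim ?F' + 1)" using minF[of ?F'] f2 PF by auto
    ultimately show False by linarith
  qed
qed

lemma la_lemma:
  fixes A :: "nat \<Rightarrow> 'a::euclidean_space"
  assumes "finite T" "e \<in> F" "aff_dim F > int (card T)"
  shows "\<exists>d. d \<noteq> 0 \<and> e + d \<in> affine hull F \<and> (\<forall>i\<in>T. A i \<bullet> d = 0)"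
proof (rule ccontr)
  assume H: "\<not> ?thesis"
  let ?U = "(+) (- e) ` F"
  have eh: "e \<in> affine hull F" by (rule hull_inc[OF assms(2)])
  have ah: "affine hull F = (\<lambda>x. e + x) ` span ((\<lambda>x. - e + x) ` F)"
    using affine_hull_span_gen[OF eh] .
  have dimU: "aff_dim F = int (dim ?U)" using aff_dim_eq_dim[OF eh] .
  have Z: "d = 0" if "d \<in> span ?U" "\<forall>i\<in>T. A i \<bullet> d = 0" for d
  proof -
    have "e + d \<in> (\<lambda>x. e + x) ` span ((\<lambda>x. - e + x) ` F)" using that(1) by (rule imageI)
    then have "e + d \<in> affine hull F" by (simp only: ah)
    then show ?thesis using H that(2) by blast
  qed
  define f where "f = (\<lambda>d. \<Sum>i\<in>T. (A i \<bullet> d) *\<^sub>R A i)"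
  have lf: "linear f"
    unfolding f_def
    by (rule linearI) (simp_all add: inner_add_right sum.distrib scaleR_add_left scaleR_sum_right)
  have inj: "inj_on f (span ?U)"
  proof (rule inj_onI)
    fix x y assume xy: "x \<in> span ?U" "y \<in> span ?U" "f x = f y"
    let ?d = "x - y"
    have dU: "?d \<in> span ?U" using xy span_diff by blast
    have "f ?d = 0" using xy(3) linear_diff[OF lf] by simp
    then have "?d \<bullet> f ?d = 0" by simp
    moreover have "?d \<bullet> f ?d = (\<Sum>i\<in>T. (A i \<bullet> ?d)^2)"
      unfolding f_def by (simp add: inner_sum_right power2_eq_square inner_commute)
    ultimately have "(\<Sum>i\<in>T. (A i \<bullet> ?d)^2) = 0" by simp
    then have "\<forall>i\<in>T. (A i \<bullet> ?d)^2 = 0" using sum_nonneg_eq_0_iff[OF assms(1), of "\<lambda>i. (A i \<bullet> ?d)^2"] by simp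
    then have "\<forall>i\<in>T. A i \<bullet> ?d = 0" by simp
    then have "?d = 0" using Z dU by blast
    then show "x = y" by simp
  qed
  have d1: "dim (f ` ?U) = dim ?U" using dim_image_eq[OF lf inj] .
  have fx: "f x \<in> span (A ` T)" for x
  proof -
    have "(A i \<bullet> x) *\<^sub>R A i \<in> span (A ` T)" if "i \<in> T" for i
      using that by (intro span_mul span_base imageI)
    then show ?thesis unfolding f_def by (rule span_sum)
  qed
  have sub: "f ` ?U \<subseteq> span (A ` T)" using fx by blast
  have d2: "dim (f ` ?U) \<le> card (A ` T)" using dim_le_card[OF sub finite_imageI[OF assms(1)]] .
  have d3: "card (A ` T) \<le> card T" using card_image_le[OF assms(1)] .
  have le: "dim ?U \<le> card T" using order_trans[OF d2[unfolded d1] d3] .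
  have "int (card T) < int (dim ?U)" using assms(3) unfolding dimU .
  then have lt: "card T < dim ?U" by (simp only: of_nat_less_iff)
  show False using leD[OF le] lt by contradiction
qed

lemma orth_proj_span:
  fixes S :: "'a::euclidean_space set"
  shows "orth_proj S x \<in> span S"
proof -
  obtain y z where yz: "y \<in> span S" "\<And>w. w \<in> span S \<Longrightarrow> orthogonal z w" "x = y + z"
    using orthogonal_subspace_decomp_exists by blast
  have ex: "\<exists>!y. y \<in> span S \<and> (\<forall>w\<in>span S. (x - y) \<bullet> w = 0)"
  proof (rule ex1I[of _ y])
    show "y \<in> span S \<and> (\<forall>w\<in>span S. (x - y) \<bullet> w = 0)" using yz by (simp add: orthogonal_def)
  next
    fix y' assume h: "y' \<in> span S \<and> (\<forall>w\<in>span S. (x - y') \<bullet> w = 0)"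
    have "y - y' \<in> span S" using h yz span_diff by blast
    then have "(x - y') \<bullet> (y - y') = 0" "(x - y) \<bullet> (y - y') = 0"
      using h yz by (auto simp: orthogonal_def)
    then have "(y - y') \<bullet> (y - y') = 0" by (simp add: inner_diff_left)
    then show "y' = y" by simp
  qed
  show ?thesis unfolding orth_proj_def using theI'[OF ex] by blast
qed



lemma closed_ereal_le: "closed {X::'a::euclidean_space. ereal (a \<bullet> X) \<le> b}"
  by (cases b) (auto simp: closed_halfspace_le)

lemma convex_ereal_le: "convex {X::'a::euclidean_space. ereal (a \<bullet> X) \<le> b}"
  by (cases b) (auto simp: convex_halfspace_le)

lemma Crel_closed_convex:
  fixes D :: "'a::euclidean_space set"
  assumes "closed D" "convex D"
  shows "closed {X \<in> D. \<forall>i\<in>I. ereal (A i \<bullet> X) \<le> b i}" "convex {X \<in> D. \<forall>i\<in>I. ereal (A i \<bullet> X) \<le> b i}"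
proof -
  have eq: "{X \<in> D. \<forall>i\<in>I. ereal (A i \<bullet> X) \<le> b i} = D \<inter> (\<Inter>i\<in>I. {X. ereal (A i \<bullet> X) \<le> b i})"
    by auto
  show "closed {X \<in> D. \<forall>i\<in>I. ereal (A i \<bullet> X) \<le> b i}"
    unfolding eq by (intro closed_Int assms closed_INT ballI closed_ereal_le)
  show "convex {X \<in> D. \<forall>i\<in>I. ereal (A i \<bullet> X) \<le> b i}"
    unfolding eq by (intro convex_Int assms convex_INT ballI convex_ereal_le)
qed

lemma a2b_core:
  fixes Xs :: "'a::euclidean_space set" and A :: "nat \<Rightarrow> 'a"
  assumes fc: "face_cond Xs mstar"
    and Ddef: "D = clconv Xs"
    and Cdef: "C = {X \<in> Xs. \<forall>i\<in>{1..m}. ereal (A i \<bullet> X) \<le> b i}"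
    and Creldef: "Crel = {X \<in> D. \<forall>i\<in>{1..m}. ereal (A i \<bullet> X) \<le> b i}"
    and Vrel: "Vrel = (INF X\<in>Crel. ereal (A0 \<bullet> X))"
    and Vopt: "Vopt = (INF X\<in>C. ereal (A0 \<bullet> X))"
    and bnd: "bounded {X \<in> Crel. ereal (A0 \<bullet> X) = Vrel}"
    and Xs1: "Xstar \<in> Crel" and Xs2: "ereal (A0 \<bullet> Xstar) = Vrel"
    and mu0: "\<forall>i\<in>{1..m}. 0 \<le> \<mu> i"
    and Tdef: "T = {i\<in>{1..m}. \<mu> i \<noteq> 0}" and cardT: "card T = mstar"
    and slack: "\<forall>i\<in>{1..m}. ereal (A i \<bullet> Xstar) < b i \<longrightarrow> \<mu> i = 0"
    and nc: "- A0 - (\<Sum>i\<in>T. \<mu> i *\<^sub>R A i) \<in> normal_cone D Xstar"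
    and par: "\<forall>j\<in>{1..m} - T. \<exists>c::real. 0 \<le> c \<and> A j - orth_proj (A ` T) (A j) = c *\<^sub>R G"
  shows "Vopt = Vrel"
proof -
  define v where "v = A0 \<bullet> Xstar"
  have Vv: "Vrel = ereal v" using Xs2 v_def by simp
  have clD: "closed D" unfolding Ddef clconv_def by simp
  have cvD: "convex D" unfolding Ddef clconv_def by (rule convex_closure[OF convex_convex_hull])
  have XsD: "Xs \<subseteq> D" unfolding Ddef clconv_def by (rule order_trans[OF hull_subset closure_subset])
  have clC: "closed Crel" and cvC: "convex Crel"
    using Crel_closed_convex[OF clD cvD] Creldef by auto
  have CrelD: "Crel \<subseteq> D" using Creldef by auto
  define S where "S = {X \<in> Crel. A0 \<bullet> X = v}"
  have S_eq: "S = {X \<in> Crel. ereal (A0 \<bullet> X) = Vrel}" using Vv S_def by auto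
  have cS: "compact S"
  proof -
    have "closed S" unfolding S_def
      using closed_Int[OF clC closed_hyperplane[of A0 v]] by (simp add: Int_def)
    then show ?thesis using bnd S_eq by (simp add: compact_eq_bounded_closed)
  qed
  have cvS: "convex S" unfolding S_def
    using convex_Int[OF cvC convex_hyperplane[of A0 v]] by (simp add: Int_def)
  have XsS: "Xstar \<in> S" using Xs1 v_def S_def by simp
  have contG: "continuous_on S (\<lambda>X. G \<bullet> X)" by (intro continuous_intros)
  have neS: "S \<noteq> {}" using XsS by blast
  obtain x1 where x1: "x1 \<in> S" "\<And>y. y \<in> S \<Longrightarrow> G \<bullet> x1 \<le> G \<bullet> y"
    using continuous_attains_inf[OF cS neS contG] by blast
  define g where "g = G \<bullet> x1"
  define K where "K = {X \<in> S. G \<bullet> X = g}"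
  have cK: "compact K" unfolding K_def
    using closed_Int_compact[OF closed_hyperplane[of G g] cS] by (simp add: Int_def conj_commute)
  have cvK: "convex K" unfolding K_def
    using convex_Int[OF cvS convex_hyperplane[of G g]] by (simp add: Int_def)
  have neK: "K \<noteq> {}" using x1 g_def K_def by auto
  obtain e where e: "e extreme_point_of K" using extreme_point_exists_convex[OF cK cvK neK] by blast
  have eK: "e \<in> K" using e extreme_point_of_def by blast
  have eS: "e \<in> S" and eG: "G \<bullet> e = g" using eK K_def by auto
  have eC: "e \<in> Crel" and eA0: "A0 \<bullet> e = v" using eS S_def by auto
  have eD: "e \<in> D" using eC CrelD by blast
  obtain F where F: "F face_of D" "e \<in> rel_interior F" using min_face[OF cvD eD] by blast
  have finT: "finite T" using Tdef by simp
  have Tsub: "T \<subseteq> {1..m}" using Tdef by auto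
  have dimF: "aff_dim F \<le> int mstar"
  proof (rule ccontr)
    assume "\<not> ?thesis"
    then have "aff_dim F > int (card T)" using cardT by simp
    moreover have "e \<in> F" using F(2) rel_interior_subset by blast
    ultimately obtain d where d: "d \<noteq> 0" "e + d \<in> affine hull F" "\<forall>i\<in>T. A i \<bullet> d = 0"
      using la_lemma[OF finT] by blast
    obtain \<epsilon> where eps: "\<epsilon> > 0" "ball e \<epsilon> \<inter> affine hull F \<subseteq> F"
      using F(2) mem_rel_interior_ball by blast
    have line: "e + t *\<^sub>R d \<in> affine hull F" for t
    proof -
      have "(1 - t) *\<^sub>R e + t *\<^sub>R (e + d) \<in> affine hull F"
        using mem_affine[OF affine_affine_hull hull_inc[OF \<open>e \<in> F\<close>] d(2), of "1 - t" t] by simp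
      moreover have "(1 - t) *\<^sub>R e + t *\<^sub>R (e + d) = e + t *\<^sub>R d" by (simp add: algebra_simps)
      ultimately show ?thesis by simp
    qed
    define d' where "d' = (\<epsilon> / (2 * norm d)) *\<^sub>R d"
    have nd: "norm d > 0" using d(1) by simp
    have nd': "norm d' = \<epsilon> / 2" unfolding d'_def using nd eps(1) by simp
    have d'0: "d' \<noteq> 0" using nd' eps(1) by auto
    have inF: "e + s \<in> F" if "s = d' \<or> s = - d'" for s
    proof -
      have "e + s \<in> affine hull F"
        using that line[of "\<epsilon> / (2 * norm d)"] line[of "- (\<epsilon> / (2 * norm d))"] unfolding d'_def by auto
      moreover have "e + s \<in> ball e \<epsilon>" using that nd' eps(1) by (auto simp: dist_norm)
      ultimately show ?thesis using eps(2) by blast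
    qed
    have FD: "F \<subseteq> D" using F(1) face_of_imp_subset by blast
    have Ad': "A i \<bullet> s = 0" if "i \<in> T" "s = d' \<or> s = - d'" for i s
      using d(3) that unfolding d'_def by auto
    define l where "l = A0 + (\<Sum>i\<in>T. \<mu> i *\<^sub>R A i)"
    have lmin: "l \<bullet> Xstar \<le> l \<bullet> Y" if "Y \<in> D" for Y
    proof -
      have "(- A0 - (\<Sum>i\<in>T. \<mu> i *\<^sub>R A i)) \<bullet> (Y - Xstar) \<le> 0"
        using nc that unfolding normal_cone_def by blast
      then have "- (l \<bullet> (Y - Xstar)) \<le> 0" unfolding l_def
        by (simp add: inner_diff_left inner_add_left)
      then show ?thesis by (simp add: inner_diff_right)
    qed
    have tight: "A i \<bullet> e \<le> A i \<bullet> Xstar" if "i \<in> T" for i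
    proof -
      have i: "i \<in> {1..m}" "\<mu> i \<noteq> 0" using that Tdef by auto
      have "ereal (A i \<bullet> Xstar) \<le> b i" using Xs1 Creldef i by auto
      moreover have "\<not> ereal (A i \<bullet> Xstar) < b i" using slack i by auto
      ultimately have "b i = ereal (A i \<bullet> Xstar)" by auto
      moreover have "ereal (A i \<bullet> e) \<le> b i" using eC Creldef i by auto
      ultimately show ?thesis by simp
    qed
    have le: "l \<bullet> e \<le> l \<bullet> Xstar"
    proof -
      have "(\<Sum>i\<in>T. \<mu> i * (A i \<bullet> e)) \<le> (\<Sum>i\<in>T. \<mu> i * (A i \<bullet> Xstar))"
        using tight mu0 Tsub by (intro sum_mono mult_left_mono) auto
      then show ?thesis unfolding l_def using eA0 v_def
        by (simp add: inner_add_left inner_sum_left)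
    qed
    have ld: "l \<bullet> d' = 0"
    proof -
      have p1: "e + d' \<in> D" using inF[of d'] FD by blast
      have p2: "e + - d' \<in> D" using inF[of "- d'"] FD by blast
      have "l \<bullet> e \<le> l \<bullet> (e + d')" using lmin[OF p1] le by linarith
      moreover have "l \<bullet> e \<le> l \<bullet> (e + - d')" using lmin[OF p2] le by linarith
      ultimately show ?thesis by (simp add: inner_add_right inner_diff_right)
    qed
    have A0d: "A0 \<bullet> s = 0" if "s = d' \<or> s = - d'" for s
    proof -
      have "l \<bullet> d' = A0 \<bullet> d' + (\<Sum>i\<in>T. \<mu> i * (A i \<bullet> d'))"
        unfolding l_def by (simp add: inner_add_left inner_sum_left)
      also have "\<dots> = A0 \<bullet> d'"
      proof -
        have "(\<Sum>i\<in>T. \<mu> i * (A i \<bullet> d')) = 0"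
          by (rule sum.neutral) (simp add: Ad')
        then show ?thesis by simp
      qed
      finally have z: "A0 \<bullet> d' = 0" using ld by simp
      from that show ?thesis
      proof
        assume "s = d'" then show ?thesis using z by simp
      next
        assume "s = - d'" then show ?thesis using z by simp
      qed
    qed
    have Aj: "\<exists>c\<ge>0. A j \<bullet> s = c * (G \<bullet> s)" if jT: "j \<in> {1..m} - T" and sd: "s = d' \<or> s = - d'" for j s
    proof -
      obtain c where c: "0 \<le> c" "A j - orth_proj (A ` T) (A j) = c *\<^sub>R G" using par jT by blast
      have "orthogonal s (orth_proj (A ` T) (A j))"
        by (rule orthogonal_to_span[OF orth_proj_span]) (use Ad' sd in \<open>auto simp: orthogonal_def inner_commute\<close>)
      then have "orth_proj (A ` T) (A j) \<bullet> s = 0" by (simp add: orthogonal_def inner_commute)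
      moreover have eqA: "A j = orth_proj (A ` T) (A j) + c *\<^sub>R G" using c(2) by (simp add: algebra_simps)
      have "A j \<bullet> s = (orth_proj (A ` T) (A j) + c *\<^sub>R G) \<bullet> s"
        using arg_cong[where f="\<lambda>x. x \<bullet> s", OF eqA] .
      ultimately have "A j \<bullet> s = c * (G \<bullet> s)"
        by (simp add: inner_add_left)
      then show ?thesis using c(1) by blast
    qed
    have inCrel: "e + s \<in> Crel" if s: "s = d' \<or> s = - d'" "G \<bullet> s \<le> 0" for s
    proof -
      have "e + s \<in> D" using inF[OF s(1)] FD by blast
      moreover have "ereal (A i \<bullet> (e + s)) \<le> b i" if i: "i \<in> {1..m}" for i
      proof (cases "i \<in> T")
        case True
        then show ?thesis using Ad'[OF True s(1)] eC Creldef i by (auto simp: inner_add_right)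
      next
        case False
        then obtain c where "c \<ge> 0" "A i \<bullet> s = c * (G \<bullet> s)" using Aj[of i s] i s(1) by blast
        then have "A i \<bullet> s \<le> 0" using s(2) by (simp add: mult_nonneg_nonpos)
        then have "ereal (A i \<bullet> (e + s)) \<le> ereal (A i \<bullet> e)" by (simp add: inner_add_right)
        also have "\<dots> \<le> b i" using eC Creldef i by auto
        finally show ?thesis .
      qed
      ultimately show ?thesis using Creldef by auto
    qed
    have inS: "e + s \<in> S" if s: "s = d' \<or> s = - d'" "G \<bullet> s \<le> 0" for s
      using inCrel[OF s] A0d[OF s(1)] eA0 S_def by (auto simp: inner_add_right)
    have Gs: "G \<bullet> s = 0" if s: "s = d' \<or> s = - d'" "G \<bullet> s \<le> 0" for s
    proof -
      have "G \<bullet> x1 \<le> G \<bullet> (e + s)" using x1(2)[OF inS[OF s]] .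
      then show ?thesis using eG g_def s(2) by (simp add: inner_add_right)
    qed
    have Gd: "G \<bullet> d' = 0"
    proof (cases "G \<bullet> d' \<le> 0")
      case True then show ?thesis using Gs by blast
    next
      case False
      then have "G \<bullet> (- d') \<le> 0" by simp
      then have "G \<bullet> (- d') = 0" using Gs by blast
      then show ?thesis by simp
    qed
    have K1: "e + d' \<in> K" using inS[of d'] Gd eG K_def by (auto simp: inner_add_right)
    have K2: "e + - d' \<in> K" using inS[of "- d'"] Gd eG K_def by (auto simp: inner_add_right inner_diff_right)
    have "(e + - d') + (e + d') = 2 *\<^sub>R e" by (simp add: scaleR_2)
    then have "midpoint (e + - d') (e + d') = e" by (simp add: midpoint_def)
    moreover have "e + - d' \<noteq> e + d'"
    proof
      assume "e + - d' = e + d'"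
      then have md: "- d' = d'" by simp
      have "d' + d' = 0" using add.right_inverse[of d'] unfolding md .
      then have "2 *\<^sub>R d' = 0" by (simp add: scaleR_2)
      then show False using d'0 by simp
    qed
    ultimately have "e \<in> open_segment (e + - d') (e + d')"
      using midpoint_in_open_segment[of "e + - d'" "e + d'"] by simp
    then show False using e K1 K2 unfolding extreme_point_of_def by blast
  qed
  have "F \<subseteq> Xs" using fc F(1) dimF Ddef unfolding face_cond_def by blast
  then have "e \<in> Xs" using F(2) rel_interior_subset by blast
  then have eCC: "e \<in> C" using eC Cdef Creldef by auto
  have "Vopt \<le> Vrel" unfolding Vopt using INF_lower[OF eCC, of "\<lambda>X. ereal (A0 \<bullet> X)"] eA0 Vv by simp
  moreover have "Vrel \<le> Vopt" unfolding Vrel Vopt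
    by (rule INF_superset_mono) (use Cdef Creldef XsD in auto)
  ultimately show ?thesis by simp
qed



lemma b2a_core:
  fixes Xs :: "'a::euclidean_space set"
  assumes clX: "closed Xs" and Fface: "F face_of clconv Xs" and dimF: "aff_dim F \<le> int mstar"
    and nsub: "\<not> F \<subseteq> Xs"
  shows "\<not> lmi_cond Xs mstar"
proof
  assume L: "lmi_cond Xs mstar"
  define D where "D = clconv Xs"
  have clD: "closed D" unfolding D_def clconv_def by simp
  have cvD: "convex D" unfolding D_def clconv_def by (rule convex_closure[OF convex_convex_hull])
  have XsD: "Xs \<subseteq> D" unfolding D_def clconv_def by (rule order_trans[OF hull_subset closure_subset])
  have FD: "F \<subseteq> D" using Fface D_def face_of_imp_subset by blast
  have opX: "open (- Xs)" using clX by (simp add: open_Compl)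
  obtain x0 where x0: "x0 \<in> F" "x0 \<notin> Xs" "F = D \<longrightarrow> x0 \<in> rel_interior D"
  proof (cases "F = D")
    case False
    then show ?thesis using nsub that by blast
  next
    case True
    obtain x1 where x1: "x1 \<in> F" "x1 \<notin> Xs" using nsub by blast
    obtain \<epsilon> where eps: "\<epsilon> > 0" "ball x1 \<epsilon> \<subseteq> - Xs"
      using opX x1(2) open_contains_ball by blast
    have "x1 \<in> closure (rel_interior D)"
      using convex_closure_rel_interior[OF cvD] clD x1(1) True closure_closed by auto
    then obtain y where y: "y \<in> rel_interior D" "dist y x1 < \<epsilon>"
      using closure_approachable eps(1) by blast
    have "y \<notin> Xs" using y(2) eps(2) by (auto simp: dist_commute)
    moreover have "y \<in> F" using y(1) rel_interior_subset True by blast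
    ultimately show ?thesis using that y(1) by blast
  qed
  obtain \<delta> where del: "\<delta> > 0" "ball x0 \<delta> \<subseteq> - Xs"
    using opX x0(2) open_contains_ball by blast
  have x0D: "x0 \<in> D" using x0(1) FD by blast
  have riD: "rel_interior D \<noteq> {}" using rel_interior_eq_empty[OF cvD] x0D by blast
  define y0 where "y0 = (if x0 \<in> rel_interior D then x0 else (SOME y. y \<in> rel_interior D))"
  have y0: "y0 \<in> rel_interior D" unfolding y0_def using riD some_in_eq by auto
  define u where "u = y0 - x0"
  define U where "U = (+) (- x0) ` F"
  obtain B where B: "B \<subseteq> U" "independent B" "U \<subseteq> span B" "card B = dim U"
    using basis_exists by blast
  have finB: "finite B" using independent_bound B(2) by blast
  have x0h: "x0 \<in> affine hull F" by (rule hull_inc[OF x0(1)])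
  have cardB: "card B \<le> mstar" using aff_dim_eq_dim[OF x0h] dimF B(4) U_def by simp
  obtain uV up where uvp: "uV \<in> span U" "\<And>w. w \<in> span U \<Longrightarrow> orthogonal up w" "u = uV + up"
    using orthogonal_subspace_decomp_exists by blast
  have upu: "up \<bullet> u = up \<bullet> up"
    using uvp by (simp add: inner_add_right orthogonal_def)
  have up0: "u = 0" if "up = 0"
  proof -
    have "u \<in> span U" using uvp that by simp
    then have "x0 + u \<in> (\<lambda>x. x0 + x) ` span ((\<lambda>x. - x0 + x) ` F)"
      unfolding U_def by (rule imageI)
    then have "x0 + u \<in> affine hull F"
      by (simp only: affine_hull_span_gen[OF x0h])
    then have yh: "y0 \<in> affine hull F" using u_def by simp
    show ?thesis
    proof (cases "x0 \<in> rel_interior D")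
      case True then show ?thesis using u_def y0_def by simp
    next
      case False
      then have "F \<noteq> D" using x0(3) by blast
      then have "affine hull F \<inter> rel_interior D = {}"
        using affine_hull_face_of_disjoint_rel_interior[OF cvD] Fface D_def by blast
      then show ?thesis using yh y0 by blast
    qed
  qed
  obtain h where h: "bij_betw h {1..card B} B" using ex_bij_betw_nat_finite_1[OF finB] by blast
  define r where "r = card B"
  define cf where "cf = (\<lambda>w. if up = 0 then 0 else (w \<bullet> u) / (up \<bullet> up))"
  define A' where "A' = (\<lambda>i. if i \<in> {1..r} then h i - cf (h i) *\<^sub>R up else 0)"
  have P1: "A' i \<bullet> u = 0" for i
  proof (cases "i \<in> {1..r}")
    case True
    show ?thesis
    proof (cases "up = 0")
      case True
      then show ?thesis using up0 by simp
    next
      case False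
      then have nz: "up \<bullet> up \<noteq> 0" by simp
      have a1: "A' i = h i - cf (h i) *\<^sub>R up" using True by (simp add: A'_def)
      have a2: "cf (h i) = (h i \<bullet> u) / (up \<bullet> up)" using False by (simp add: cf_def)
      have "A' i \<bullet> u = h i \<bullet> u - (h i \<bullet> u) / (up \<bullet> up) * (up \<bullet> u)"
        unfolding a1 a2 by (simp add: inner_diff_left)
      also have "\<dots> = 0" using nz upu by simp
      finally show ?thesis .
    qed
  next
    case False then show ?thesis unfolding A'_def if_not_P[OF False] by simp
  qed
  have P2: "a = x0" if a: "a \<in> F" "\<forall>i\<in>{1..mstar}. A' i \<bullet> a = A' i \<bullet> x0" for a
  proof -
    define dd where "dd = a - x0"
    have ddU: "dd \<in> U" using a(1) U_def dd_def by force
    then have ddsU: "dd \<in> span U" by (simp add: span_base)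
    have ddsB: "dd \<in> span B" using ddU B(3) by blast
    have updd: "up \<bullet> dd = 0" using uvp(2)[OF ddsU] by (simp add: orthogonal_def)
    have "orthogonal dd w" if w: "w \<in> B" for w
    proof -
      obtain i where i: "i \<in> {1..r}" "h i = w" using h w r_def
        by (metis bij_betw_imp_surj_on imageE)
      have "i \<in> {1..mstar}" using i(1) cardB r_def by auto
      then have "A' i \<bullet> dd = 0" using a(2) dd_def by (simp add: inner_diff_right)
      then have "w \<bullet> dd = 0" using i updd unfolding A'_def by (simp add: inner_diff_left)
      then show ?thesis by (simp add: orthogonal_def inner_commute)
    qed
    then have "orthogonal dd dd" using orthogonal_to_span[OF ddsB] by blast
    then have "dd = 0" by (simp add: orthogonal_def)
    then show ?thesis using dd_def by simp
  qed
  define K where "K = {X \<in> D. \<forall>i\<in>{1..mstar}. A' i \<bullet> X = A' i \<bullet> x0}"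
  have Keq: "K = D \<inter> (\<Inter>i\<in>{1..mstar}. {X. A' i \<bullet> X = A' i \<bullet> x0})" unfolding K_def by auto
  have clK: "closed K" unfolding Keq by (intro closed_Int clD closed_INT ballI closed_hyperplane)
  have cvK: "convex K" unfolding Keq by (intro convex_Int cvD convex_INT ballI convex_hyperplane)
  have x0K: "x0 \<in> K" using x0D K_def by simp
  have KF: False if "a \<in> K" "c \<in> K" "x0 \<in> open_segment a c" for a c
  proof -
    have "a \<in> F" using Fface that x0(1) D_def K_def unfolding face_of_def by blast
    then have "a = x0" using P2 that(1) K_def by blast
    then show False using that(3) by (simp add: open_segment_def)
  qed
  define Cs where "Cs = K \<inter> sphere x0 \<delta>"
  have cCs: "compact Cs" unfolding Cs_def by (intro closed_Int_compact clK compact_sphere)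
  have x0nC: "x0 \<notin> convex hull Cs"
  proof
    assume H: "x0 \<in> convex hull Cs"
    have sub: "convex hull Cs \<subseteq> K" by (rule hull_minimal) (auto simp: Cs_def cvK)
    have "x0 extreme_point_of (convex hull Cs)"
      unfolding extreme_point_of_def using H sub KF by blast
    then have "x0 \<in> Cs" by (rule extreme_point_of_convex_hull)
    then show False using del(1) Cs_def by simp
  qed
  have clCs: "closed (convex hull Cs)" using compact_convex_hull[OF cCs] compact_imp_closed by blast
  obtain G \<beta> where G: "G \<bullet> x0 < \<beta>" "\<And>x. x \<in> convex hull Cs \<Longrightarrow> \<beta> < G \<bullet> x"
    using separating_hyperplane_closed_point[OF convex_convex_hull clCs x0nC] by blast
  have SB: "dist x0 X < \<delta>" if X: "X \<in> K" "G \<bullet> X \<le> \<beta>" for X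
  proof (rule ccontr)
    assume "\<not> ?thesis"
    then have dX: "\<delta> \<le> norm (X - x0)" by (simp add: dist_norm norm_minus_commute)
    define n where "n = norm (X - x0)"
    have n0: "n > 0" using dX del(1) n_def by linarith
    define t where "t = \<delta> / n"
    have t: "0 < t" "t \<le> 1" using n0 del(1) dX n_def t_def by auto
    define z where "z = (1 - t) *\<^sub>R x0 + t *\<^sub>R X"
    have zK: "z \<in> K" unfolding z_def using convexD[OF cvK x0K X(1)] t by simp
    have "z - x0 = t *\<^sub>R (X - x0)" unfolding z_def by (simp add: algebra_simps)
    then have "norm (z - x0) = t * n" using t n_def by simp
    then have "dist x0 z = \<delta>" using t_def n0 by (simp add: dist_norm norm_minus_commute)
    then have "z \<in> Cs" using zK Cs_def by simp
    then have "\<beta> < G \<bullet> z" using G(2)[OF hull_inc] by blast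
    moreover have "G \<bullet> z = (1 - t) * (G \<bullet> x0) + t * (G \<bullet> X)" unfolding z_def
      by (simp add: inner_add_right)
    moreover have "(1 - t) * (G \<bullet> x0) \<le> (1 - t) * \<beta>" using G(1) t by (intro mult_left_mono) auto
    moreover have "t * (G \<bullet> X) \<le> t * \<beta>" using X(2) t by (intro mult_left_mono) auto
    ultimately show False by (simp add: algebra_simps)
  qed
  define q where "q = (\<beta> - G \<bullet> x0) / (\<bar>G \<bullet> u\<bar> + 1)"
  have q0: "q > 0" using G(1) q_def by (simp add: divide_pos_pos)
  define t0 where "t0 = min 1 q"
  have t0: "0 < t0" "t0 \<le> 1" "t0 \<le> q" using q0 t0_def by auto
  define y where "y = x0 - t0 *\<^sub>R (x0 - y0)"
  have yri: "y \<in> rel_interior D"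
    unfolding y_def by (rule rel_interior_closure_convex_shrink[OF cvD y0]) (use x0D closure_subset t0 in auto)
  have yu: "y = x0 + t0 *\<^sub>R u" unfolding y_def u_def by (simp add: algebra_simps)
  have qq: "q * \<bar>G \<bullet> u\<bar> < \<beta> - G \<bullet> x0"
  proof -
    have "q * (\<bar>G \<bullet> u\<bar> + 1) = \<beta> - G \<bullet> x0" unfolding q_def by simp
    then show ?thesis using q0 by (simp add: algebra_simps)
  qed
  have Gy: "G \<bullet> y < \<beta>"
  proof -
    have "t0 * (G \<bullet> u) \<le> t0 * \<bar>G \<bullet> u\<bar>" using t0 by (intro mult_left_mono) auto
    also have "\<dots> \<le> q * \<bar>G \<bullet> u\<bar>" using t0 by (intro mult_right_mono) auto
    finally have "t0 * (G \<bullet> u) < \<beta> - G \<bullet> x0" using qq by linarith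
    then show ?thesis unfolding yu by (simp add: inner_add_right)
  qed
  have A'y: "A' i \<bullet> y = A' i \<bullet> x0" for i unfolding yu using P1[of i] by (simp add: inner_add_right)
  define m where "m = Suc mstar"
  define A where "A = (\<lambda>i. if i = Suc mstar then G else A' i)"
  define b where "b = (\<lambda>i. if i = Suc mstar then ereal \<beta> else ereal (A' i \<bullet> x0))"
  define A0 where "A0 = - (\<Sum>i\<in>{1..mstar}. A' i)"
  define \<mu> where "\<mu> = (\<lambda>i::nat. if i \<in> {1..mstar} then (1::real) else 0)"
  define C where "C = {X \<in> Xs. \<forall>i\<in>{1..m}. ereal (A i \<bullet> X) \<le> b i}"
  define Crel where "Crel = {X \<in> D. \<forall>i\<in>{1..m}. ereal (A i \<bullet> X) \<le> b i}"
  define Vopt where "Vopt = (INF X\<in>C. ereal (A0 \<bullet> X))"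
  define Vrel where "Vrel = (INF X\<in>Crel. ereal (A0 \<bullet> X))"
  have m_split: "{1..m} = insert (Suc mstar) {1..mstar}" unfolding m_def by auto
  have CrelE: "X \<in> Crel \<longleftrightarrow> X \<in> D \<and> (\<forall>i\<in>{1..mstar}. A' i \<bullet> X \<le> A' i \<bullet> x0) \<and> G \<bullet> X \<le> \<beta>" for X
    unfolding Crel_def m_split A_def b_def by auto
  have clCr: "closed Crel" and cvCr: "convex Crel"
    using Crel_closed_convex[OF clD cvD] Crel_def by auto
  define \<phi> where "\<phi> = (\<lambda>X. A0 \<bullet> (X - x0))"
  have phi_eq: "\<phi> X = (\<Sum>i\<in>{1..mstar}. A' i \<bullet> x0 - A' i \<bullet> X)" for X
    unfolding \<phi>_def A0_def by (simp add: inner_sum_left inner_diff_right sum_subtractf sum_negf)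
  have phi_nn: "\<phi> X \<ge> 0" if "X \<in> Crel" for X
    unfolding phi_eq using that CrelE by (intro sum_nonneg) auto
  have phi_0: "X \<in> K" if "X \<in> Crel" "\<phi> X = 0" for X
  proof -
    have "\<forall>i\<in>{1..mstar}. A' i \<bullet> x0 - A' i \<bullet> X = 0"
      using that sum_nonneg_eq_0_iff[of "{1..mstar}" "\<lambda>i. A' i \<bullet> x0 - A' i \<bullet> X"] CrelE phi_eq
      by auto
    then show ?thesis using that CrelE K_def by auto
  qed
  have A0X: "A0 \<bullet> X = A0 \<bullet> x0 + \<phi> X" for X unfolding \<phi>_def by (simp add: inner_diff_right)
  have x0Cr: "x0 \<in> Crel" using CrelE x0D G(1) by auto
  have VrelEq: "Vrel = ereal (A0 \<bullet> x0)"
  proof (rule antisym)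
    show "Vrel \<le> ereal (A0 \<bullet> x0)" unfolding Vrel_def using x0Cr by (rule INF_lower)
    show "ereal (A0 \<bullet> x0) \<le> Vrel" unfolding Vrel_def
    proof (rule INF_greatest)
      fix X assume X: "X \<in> Crel"
      have "A0 \<bullet> X = A0 \<bullet> x0 + \<phi> X" by (rule A0X)
      then show "ereal (A0 \<bullet> x0) \<le> ereal (A0 \<bullet> X)" using phi_nn[OF X] by simp
    qed
  qed
  have Sball: "{X \<in> Crel. ereal (A0 \<bullet> X) = Vrel} \<subseteq> ball x0 \<delta>"
  proof
    fix X assume X: "X \<in> {X \<in> Crel. ereal (A0 \<bullet> X) = Vrel}"
    then have "\<phi> X = 0" using VrelEq A0X[of X] by auto
    then have "X \<in> K" using phi_0 X by blast
    moreover have "G \<bullet> X \<le> \<beta>" using X CrelE by auto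
    ultimately show "X \<in> ball x0 \<delta>" using SB by simp
  qed
  obtain \<gamma> where gam: "\<gamma> > 0" "\<And>z. z \<in> Crel \<inter> sphere x0 \<delta> \<Longrightarrow> \<gamma> \<le> \<phi> z"
  proof (cases "Crel \<inter> sphere x0 \<delta> = {}")
    case True then show ?thesis using that[of 1] by auto
  next
    case False
    have cZ: "compact (Crel \<inter> sphere x0 \<delta>)" by (intro closed_Int_compact clCr compact_sphere)
    have contphi: "continuous_on (Crel \<inter> sphere x0 \<delta>) \<phi>" unfolding \<phi>_def by (intro continuous_intros)
    obtain z0 where z0: "z0 \<in> Crel \<inter> sphere x0 \<delta>" "\<And>z. z \<in> Crel \<inter> sphere x0 \<delta> \<Longrightarrow> \<phi> z0 \<le> \<phi> z"
      using continuous_attains_inf[OF cZ False contphi] by blast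
    have "\<phi> z0 \<noteq> 0"
    proof
      assume "\<phi> z0 = 0"
      then have "z0 \<in> {X \<in> Crel. ereal (A0 \<bullet> X) = Vrel}" using z0(1) VrelEq A0X[of z0] by auto
      then have "dist x0 z0 < \<delta>" using Sball by auto
      then show False using z0(1) by simp
    qed
    then have "\<phi> z0 > 0" using phi_nn z0(1) by force
    then show ?thesis using that[of "\<phi> z0"] z0(2) by blast
  qed
  have gapX: "\<gamma> \<le> \<phi> X" if X: "X \<in> Crel" "\<delta> \<le> dist x0 X" for X
  proof -
    define n where "n = norm (X - x0)"
    have dX: "\<delta> \<le> n" using X(2) n_def by (simp add: dist_norm norm_minus_commute)
    have n0: "n > 0" using dX del(1) by linarith
    define t where "t = \<delta> / n"
    have t: "0 < t" "t \<le> 1" using n0 del(1) dX t_def by auto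
    define z where "z = (1 - t) *\<^sub>R x0 + t *\<^sub>R X"
    have zC: "z \<in> Crel" unfolding z_def using convexD[OF cvCr x0Cr X(1)] t by simp
    have zx: "z - x0 = t *\<^sub>R (X - x0)" unfolding z_def by (simp add: algebra_simps)
    then have "norm (z - x0) = t * n" using t n_def by simp
    then have "dist x0 z = \<delta>" using t_def n0 by (simp add: dist_norm norm_minus_commute)
    then have "\<gamma> \<le> \<phi> z" using gam(2) zC by simp
    moreover have "\<phi> z = t * \<phi> X" unfolding \<phi>_def zx by simp
    moreover have "t * \<phi> X \<le> \<phi> X" using t phi_nn[OF X(1)] by (simp add: mult_left_le_one_le)
    ultimately show ?thesis by linarith
  qed
  have VoptGe: "ereal (A0 \<bullet> x0 + \<gamma>) \<le> Vopt" unfolding Vopt_def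
  proof (rule INF_greatest)
    fix X assume X: "X \<in> C"
    then have XC: "X \<in> Crel" using C_def Crel_def XsD by auto
    have "X \<notin> ball x0 \<delta>" using X C_def del(2) by auto
    then have "\<delta> \<le> dist x0 X" by simp
    then have "\<gamma> \<le> \<phi> X" using gapX XC by blast
    then show "ereal (A0 \<bullet> x0 + \<gamma>) \<le> ereal (A0 \<bullet> X)" using A0X[of X] by simp
  qed
  have neq: "Vopt \<noteq> Vrel" using VoptGe VrelEq gam(1) by auto
  have h1: "\<forall>i\<in>{1..m}. b i \<noteq> - \<infinity>" unfolding b_def by simp
  have h2: "Crel \<inter> rel_interior D \<noteq> {}"
  proof -
    have "y \<in> Crel" using CrelE yri rel_interior_subset A'y Gy by auto
    then show ?thesis using yri by blast
  qed
  have h3: "- \<infinity> < Vrel" using VrelEq by simp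
  have h4: "bounded {X \<in> Crel. ereal (A0 \<bullet> X) = Vrel}"
    using Sball bounded_subset bounded_ball by blast
  have AT: "A i = A' i" if "i \<in> {1..mstar}" for i using that A_def by auto
  have h5: "\<exists>Xstar (\<mu>::nat \<Rightarrow> real) T.
               Xstar \<in> Crel \<and> ereal (A0 \<bullet> Xstar) = Vrel
               \<and> (\<forall>i\<in>{1..m}. 0 \<le> \<mu> i)
               \<and> T = {i\<in>{1..m}. \<mu> i \<noteq> 0} \<and> card T = mstar
               \<and> (\<forall>i\<in>{1..m}. ereal (A i \<bullet> Xstar) < b i \<longrightarrow> \<mu> i = 0)
               \<and> - A0 - (\<Sum>i\<in>T. \<mu> i *\<^sub>R A i) \<in> normal_cone D Xstar
               \<and> (\<exists>G. \<forall>j\<in>{1..m} - T. \<exists>c::real. 0 \<le> c \<and>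
                        A j - orth_proj (A ` T) (A j) = c *\<^sub>R G)"
  proof (intro exI conjI)
    show "x0 \<in> Crel" by (rule x0Cr)
    show "ereal (A0 \<bullet> x0) = Vrel" using VrelEq by simp
    show "\<forall>i\<in>{1..m}. 0 \<le> \<mu> i" unfolding \<mu>_def by simp
    show "{1..mstar} = {i\<in>{1..m}. \<mu> i \<noteq> 0}" unfolding \<mu>_def m_def by auto
    show "card {1..mstar} = mstar" by simp
    show "\<forall>i\<in>{1..m}. ereal (A i \<bullet> x0) < b i \<longrightarrow> \<mu> i = 0"
      unfolding m_split A_def b_def \<mu>_def by auto
    have "(\<Sum>i\<in>{1..mstar}. \<mu> i *\<^sub>R A i) = (\<Sum>i\<in>{1..mstar}. A' i)"
      by (rule sum.cong) (auto simp: \<mu>_def AT)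
    then have "- A0 - (\<Sum>i\<in>{1..mstar}. \<mu> i *\<^sub>R A i) = 0" unfolding A0_def by simp
    then show "- A0 - (\<Sum>i\<in>{1..mstar}. \<mu> i *\<^sub>R A i) \<in> normal_cone D x0"
      unfolding normal_cone_def by simp
    show "\<forall>j\<in>{1..m} - {1..mstar}. \<exists>c::real. 0 \<le> c \<and>
            A j - orth_proj (A ` {1..mstar}) (A j) = c *\<^sub>R (A (Suc mstar) - orth_proj (A ` {1..mstar}) (A (Suc mstar)))"
    proof
      fix j assume "j \<in> {1..m} - {1..mstar}"
      then have "j = Suc mstar" unfolding m_def by auto
      then show "\<exists>c::real. 0 \<le> c \<and>
            A j - orth_proj (A ` {1..mstar}) (A j) = c *\<^sub>R (A (Suc mstar) - orth_proj (A ` {1..mstar}) (A (Suc mstar)))"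
        by (intro exI[of _ 1]) simp
    qed
  qed
  have imp: "(\<forall>i\<in>{1..m}. b i \<noteq> - \<infinity>) \<and> Crel \<inter> rel_interior D \<noteq> {} \<and> - \<infinity> < Vrel
     \<and> bounded {X \<in> Crel. ereal (A0 \<bullet> X) = Vrel}
     \<and> (\<exists>Xstar (\<mu>::nat \<Rightarrow> real) T.
               Xstar \<in> Crel \<and> ereal (A0 \<bullet> Xstar) = Vrel
               \<and> (\<forall>i\<in>{1..m}. 0 \<le> \<mu> i)
               \<and> T = {i\<in>{1..m}. \<mu> i \<noteq> 0} \<and> card T = mstar
               \<and> (\<forall>i\<in>{1..m}. ereal (A i \<bullet> Xstar) < b i \<longrightarrow> \<mu> i = 0)
               \<and> - A0 - (\<Sum>i\<in>T. \<mu> i *\<^sub>R A i) \<in> normal_cone D Xstar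
               \<and> (\<exists>G. \<forall>j\<in>{1..m} - T. \<exists>c::real. 0 \<le> c \<and>
                        A j - orth_proj (A ` T) (A j) = c *\<^sub>R G))
     \<longrightarrow> Vopt = Vrel"
    using L[unfolded lmi_cond_def Let_def, THEN spec[of _ m], THEN spec[of _ A0], THEN spec[of _ A], THEN spec[of _ b]]
    unfolding D_def[symmetric] C_def[symmetric] Crel_def[symmetric] Vopt_def[symmetric] Vrel_def[symmetric] .
  have "Vopt = Vrel" by (rule mp[OF imp]) (intro conjI h1 h2 h3 h4 h5)
  with neq show False by contradiction
qed


lemma equiv_main:
  fixes Xs :: "'a::euclidean_space set"
  assumes cl: "closed Xs"
  shows "face_cond Xs mstar \<longleftrightarrow> lmi_cond Xs mstar"
proof
  assume fc: "face_cond Xs mstar"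
  show "lmi_cond Xs mstar"
    unfolding lmi_cond_def Let_def
    apply (intro allI impI)
    apply (elim conjE exE)
    apply (rule a2b_core[OF fc refl refl refl refl refl])
    apply assumption+
    done
next
  assume L: "lmi_cond Xs mstar"
  show "face_cond Xs mstar"
    unfolding face_cond_def
  proof (intro allI impI)
    fix F assume F: "F face_of clconv Xs \<and> aff_dim F \<le> int mstar"
    show "F \<subseteq> Xs"
    proof (rule ccontr)
      assume "\<not> F \<subseteq> Xs"
      then have "\<not> lmi_cond Xs mstar" using b2a_core[OF cl] F by blast
      then show False using L by contradiction
    qed
  qed
qed

theorem theorem10:
  fixes k mstar :: nat
  assumes "1 \<le> k" and "k \<le> CARD('n)" and "CARD('n) \<le> CARD('p)"
  shows
   "(\<forall>(Q :: (real^'n^'n) set) Xs.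
        (Q = psd_mats \<or> Q = sym_mats) \<and> is_domain_set Q k Xs \<and> Xs \<noteq> {} \<and> closed Xs
        \<and> \<not> contains_line (clconv Xs)
        \<longrightarrow> (face_cond Xs mstar \<longleftrightarrow> lmi_cond Xs mstar))
    \<and> (\<forall>Xs :: (real^'p^'n) set.
        is_domain_set UNIV k Xs \<and> Xs \<noteq> {} \<and> closed Xs \<and> \<not> contains_line (clconv Xs)
        \<longrightarrow> (face_cond Xs mstar \<longleftrightarrow> lmi_cond Xs mstar))"
proof (intro conjI allI impI)
  fix Q :: "(real^'n^'n) set" and Xs :: "(real^'n^'n) set"
  assume "(Q = psd_mats \<or> Q = sym_mats) \<and> is_domain_set Q k Xs \<and> Xs \<noteq> {} \<and> closed Xs
        \<and> \<not> contains_line (clconv Xs)"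
  then have "closed Xs" by blast
  then show "face_cond Xs mstar \<longleftrightarrow> lmi_cond Xs mstar" by (rule equiv_main)
next
  fix Xs :: "(real^'p^'n) set"
  assume "is_domain_set UNIV k Xs \<and> Xs \<noteq> {} \<and> closed Xs \<and> \<not> contains_line (clconv Xs)"
  then have "closed Xs" by blast
  then show "face_cond Xs mstar \<longleftrightarrow> lmi_cond Xs mstar" by (rule equiv_main)
qed

end
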